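(* For every subgroup $H\le G_{d,k}$, the multicomplex $\widetilde{\mathfrak X}_{d,k}(H)$ is link-connected.
   Context: Fix $d,k\ge1$, $[\![d]\!]=\{0,\dots,d\}$. $G_{d,k}=\langle\alpha_0,\dots,\alpha_d\mid\alpha_i^k=e\rangle$; for $J\subseteq[\![d]\!]$, $K_J=\langle\alpha_j:j\in J\rangle$, $\widehat J=[\![d]\!]\setminus J$, $\widehat i=\widehat{\{i\}}$. For $H\le G_{d,k}$, $g\in G_{d,k}$, $J\subseteq[\![d]\!]$ write $[K_{\widehat J}g]_H=\{K_{\widehat J}gh:h\in H\}$. The multicomplex $\widetilde{\mathfrak X}_{d,k}(H)$: its multicells of dimension $|J|-1$ are the classes $[K_{\widehat J}g]_H$ (for $J=[\![d]\!]$ these are the $[g]_H$, identified with left cosets $gH$); $[K_{\widehat J}g]_H$ lies over the cell $\Phi([K_{\widehat J}g]_H)=\{[K_{\widehat i}g]_H:i\in J\}$ (well defined), the underlying simplicial complex $\mathfrak X_{d,k}(H)$ consists of all such cells, and the multiplicity of a cell $\sigma$ is $|\Phi^{-1}(\sigma)|$; containment is $[K_{\widehat I}g]_H\preceq[K_{\widehat J}g]_H$ for $I\subseteq J$ (so the boundary multicells of $[K_{\widehat J}g]_H$ are the $[K_{\widehat{J\setminus\{l\}}}g]_H$, $l\in J$). A multicomplex is link-connected if for every multicell $\mathfrak a$ of dimension $j\le d-2$ (including the empty multicell, $j=-1$) the multigraph whose vertices are the $(j+1)$-multicells containing $\mathfrak a$ and whose edges are the $(j+2)$-multicells containing $\mathfrak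 a$ (each joining the two $(j+1)$-multicells containing $\mathfrak a$ that it contains) is connected. *)

theory Defs
  imports "HOL-Algebra.Algebra"
begin

text \<open>Elements are represented as equivalence classes of words over the letters 0..d
  (letter i standing for alpha_i). Since alpha_i^k = e, every element is a positive
  word; the group is the monoid presented by the relations alpha_i^k = e, i.e. words
  modulo inserting/deleting k consecutive copies of one letter.\<close>

definition words :: "nat \<Rightarrow> nat list set" where
  "words d = {w. set w \<subseteq> {0..d}}"

definition wstep :: "nat \<Rightarrow> nat \<Rightarrow> (nat list \<times> nat list) set" where
  "wstep d k = {(xs @ replicate k i @ ys, xs @ ys) | xs ys i.
                  i \<le> d \<and> xs \<in> words d \<and> ys \<in> words d}"

definition weq :: "nat \<Rightarrow> nat \<Rightarrow> (nat list \<times> nat list) set" where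
  "weq d k = (wstep d k \<union> (wstep d k)\<inverse>)\<^sup>* \<inter> (words d \<times> words d)"

definition Gdk :: "nat \<Rightarrow> nat \<Rightarrow> nat list set monoid" where
  "Gdk d k = \<lparr>carrier = words d // weq d k,
              monoid.mult = (\<lambda>A B. \<Union>a\<in>A. \<Union>b\<in>B. weq d k `` {a @ b}),
              monoid.one = weq d k `` {[]}\<rparr>"

definition alpha :: "nat \<Rightarrow> nat \<Rightarrow> nat \<Rightarrow> nat list set" where
  "alpha d k i = weq d k `` {[i]}"

definition Kgen :: "nat \<Rightarrow> nat \<Rightarrow> nat set \<Rightarrow> nat list set set" where
  "Kgen d k J = generate (Gdk d k) (alpha d k ` J)"

definition hatJ :: "nat \<Rightarrow> nat set \<Rightarrow> nat set" where
  "hatJ d J = {0..d} - J"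

definition mcls :: "nat \<Rightarrow> nat \<Rightarrow> nat list set set \<Rightarrow> nat set \<Rightarrow> nat list set
                     \<Rightarrow> nat list set set set" where
  "mcls d k H J g = (\<lambda>h. r_coset (Gdk d k) (Kgen d k (hatJ d J)) (g \<otimes>\<^bsub>Gdk d k\<^esub> h)) ` H"

text \<open>Multicells are labelled by their type J (dimension |J| - 1).\<close>
definition multicells :: "nat \<Rightarrow> nat \<Rightarrow> nat list set set
                          \<Rightarrow> (nat set \<times> nat list set set set) set" where
  "multicells d k H = {(J, mcls d k H J g) | J g. J \<subseteq> {0..d} \<and> g \<in> carrier (Gdk d k)}"

definition mc_le :: "nat \<Rightarrow> nat \<Rightarrow> nat list set set
      \<Rightarrow> (nat set \<times> nat list set set set) \<Rightarrow> (nat set \<times> nat list set set set) \<Rightarrow> bool" where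
  "mc_le d k H a b \<longleftrightarrow> (\<exists>I J g. I \<subseteq> J \<and> J \<subseteq> {0..d} \<and> g \<in> carrier (Gdk d k) \<and>
        a = (I, mcls d k H I g) \<and> b = (J, mcls d k H J g))"

definition mdim :: "(nat set \<times> 'b) \<Rightarrow> int" where
  "mdim a = int (card (fst a)) - 1"

definition link_connected ::
  "'c set \<Rightarrow> ('c \<Rightarrow> 'c \<Rightarrow> bool) \<Rightarrow> ('c \<Rightarrow> int) \<Rightarrow> int \<Rightarrow> bool" where
  "link_connected M cle dm n \<longleftrightarrow>
     (\<forall>a\<in>M. dm a \<le> n - 2 \<longrightarrow>
        (let V = {b\<in>M. dm b = dm a + 1 \<and> cle a b};
             E = {c\<in>M. dm c = dm a + 2 \<and> cle a c};
             adj = (\<lambda>u v. u \<in> V \<and> v \<in> V \<and> (\<exists>c\<in>E. cle u c \<and> cle v c))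
         in \<forall>u\<in>V. \<forall>v\<in>V. adj\<^sup>*\<^sup>* u v))"

definition Xtilde_link_connected :: "nat \<Rightarrow> nat \<Rightarrow> nat list set set \<Rightarrow> bool" where
  "Xtilde_link_connected d k H \<longleftrightarrow>
     link_connected (multicells d k H) (mc_le d k H) mdim (int d)"

end

theory Submission imports Defs begin

abbreviation "SS d k \<equiv> wstep d k \<union> (wstep d k)\<inverse>"

lemma words_append[simp]: "xs @ ys \<in> words d \<longleftrightarrow> xs \<in> words d \<and> ys \<in> words d"
  by (auto simp: words_def)

lemma words_Nil[simp]: "[] \<in> words d" by (simp add: words_def)

lemma words_Cons[simp]: "x # xs \<in> words d \<longleftrightarrow> x \<le> d \<and> xs \<in> words d"
  by (auto simp: words_def)

lemma words_replicate: "i \<le> d \<Longrightarrow> replicate n i \<in> words d"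
  by (auto simp: words_def)

lemma wstep_words: "(x,y) \<in> wstep d k \<Longrightarrow> x \<in> words d \<and> y \<in> words d"
  by (auto simp: wstep_def words_replicate)

lemma wstep_app: assumes "(x,y) \<in> wstep d k" "b \<in> words d"
  shows "(x@b, y@b) \<in> wstep d k" "(b@x, b@y) \<in> wstep d k"
proof -
  from assms(1) obtain xs ys i where h: "x = xs @ replicate k i @ ys" "y = xs @ ys"
    "i \<le> d" "xs \<in> words d" "ys \<in> words d" by (auto simp: wstep_def)
  show "(x@b, y@b) \<in> wstep d k" unfolding wstep_def
    by (rule CollectI, rule exI[of _ xs], rule exI[of _ "ys@b"], rule exI[of _ i]) (use h assms in auto)
  show "(b@x, b@y) \<in> wstep d k" unfolding wstep_def
    by (rule CollectI, rule exI[of _ "b@xs"], rule exI[of _ "ys"], rule exI[of _ i]) (use h assms in auto)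
qed

lemma SS_app: assumes "(x,y) \<in> (SS d k)\<^sup>*" "b \<in> words d"
  shows "(x@b, y@b) \<in> (SS d k)\<^sup>*" "(b@x, b@y) \<in> (SS d k)\<^sup>*"
  using assms(1)
proof (induction rule: rtrancl_induct)
  case base show "(x@b, x@b) \<in> (SS d k)\<^sup>*" by simp
next
  case base show "(b@x, b@x) \<in> (SS d k)\<^sup>*" by simp
next
  case (step y z)
  have "(y@b, z@b) \<in> SS d k" using step(2) wstep_app[OF _ assms(2)] by blast
  then show "(x@b, z@b) \<in> (SS d k)\<^sup>*" using step by (meson rtrancl.rtrancl_into_rtrancl)
next
  case (step y z)
  have "(b@y, b@z) \<in> SS d k" using step(2) wstep_app[OF _ assms(2)] by blast
  then show "(b@x, b@z) \<in> (SS d k)\<^sup>*" using step by (meson rtrancl.rtrancl_into_rtrancl)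
qed

lemma SS_sym: "(x,y) \<in> (SS d k)\<^sup>* \<Longrightarrow> (y,x) \<in> (SS d k)\<^sup>*"
proof -
  assume "(x,y) \<in> (SS d k)\<^sup>*"
  hence "(y,x) \<in> ((SS d k)\<inverse>)\<^sup>*" by (rule rtrancl_converseI)
  moreover have "(SS d k)\<inverse> = SS d k" by auto
  ultimately show ?thesis by simp
qed

lemma equiv_weq: "equiv (words d) (weq d k)"
proof -
  have "refl_on (words d) (weq d k)" unfolding refl_on_def weq_def by auto
  moreover have "sym (weq d k)" unfolding sym_def weq_def using SS_sym by blast
  moreover have "trans (weq d k)" unfolding trans_def weq_def
    using rtrancl_trans[of _ _ "SS d k"] by blast
  moreover have "weq d k \<subseteq> words d \<times> words d" unfolding weq_def by auto
  ultimately show ?thesis unfolding equiv_def by blast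
qed

lemma weq_cong: "(a,a') \<in> weq d k \<Longrightarrow> (b,b') \<in> weq d k \<Longrightarrow> (a@b, a'@b') \<in> weq d k"
proof -
  assume "(a,a') \<in> weq d k" "(b,b') \<in> weq d k"
  then have h: "(a,a') \<in> (SS d k)\<^sup>*" "(b,b') \<in> (SS d k)\<^sup>*" "a \<in> words d" "a' \<in> words d"
    "b \<in> words d" "b' \<in> words d" unfolding weq_def by auto
  have "(a@b, a'@b) \<in> (SS d k)\<^sup>*" using SS_app(1)[OF h(1) h(5)] .
  moreover have "(a'@b, a'@b') \<in> (SS d k)\<^sup>*" using SS_app(2)[OF h(2) h(4)] .
  ultimately have "(a@b, a'@b') \<in> (SS d k)\<^sup>*" by (rule rtrancl_trans)
  then show ?thesis unfolding weq_def using h by auto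
qed

lemma Gdk_mult: assumes "a \<in> words d" "b \<in> words d"
  shows "weq d k `` {a} \<otimes>\<^bsub>Gdk d k\<^esub> weq d k `` {b} = weq d k `` {a@b}"
proof -
  have eq: "weq d k `` {a'@b'} = weq d k `` {a@b}"
    if "a' \<in> weq d k `` {a}" "b' \<in> weq d k `` {b}" for a' b'
    using that weq_cong[of a a' d k b b'] equiv_class_eq[OF equiv_weq] by blast
  have "a \<in> weq d k `` {a}" "b \<in> weq d k `` {b}"
    using assms equiv_class_self[OF equiv_weq] by auto
  note ne = this
  have "(\<Union>a'\<in>weq d k `` {a}. \<Union>b'\<in>weq d k `` {b}. weq d k `` {a'@b'})
      = (\<Union>a'\<in>weq d k `` {a}. \<Union>b'\<in>weq d k `` {b}. weq d k `` {a@b})"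
    using eq by (intro SUP_cong refl) simp
  also have "\<dots> = weq d k `` {a@b}" using ne by blast
  finally show ?thesis unfolding Gdk_def by simp
qed

definition invw :: "nat \<Rightarrow> nat list \<Rightarrow> nat list" where
  "invw k a = concat (map (\<lambda>i. replicate (k-1) i) (rev a))"

lemma invw_words: "a \<in> words d \<Longrightarrow> invw k a \<in> words d"
  by (auto simp: invw_def words_def)

lemma invw_cancel: assumes "k \<ge> 1" "a \<in> words d"
  shows "(invw k a @ a, []) \<in> (SS d k)\<^sup>*"
  using assms(2)
proof (induction a)
  case Nil then show ?case by (simp add: invw_def)
next
  case (Cons x a)
  have inv: "invw k (x#a) = invw k a @ replicate (k-1) x" by (simp add: invw_def)
  obtain m where m: "k = Suc m" using assms(1) by (cases k) auto
  have rep0: "replicate m x @ x # a = x # replicate m x @ a" by (induct m) auto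
  have xd: "x \<le> d" "a \<in> words d" using Cons.prems by auto
  have A: "(invw k a @ replicate k x @ a, invw k a @ a) \<in> wstep d k"
    unfolding wstep_def using xd invw_words[of a d k] by blast
  have eq: "invw k (x#a) @ x # a = invw k a @ replicate k x @ a"
  proof -
    have e1: "invw k (x#a) @ x # a = invw k a @ (replicate (k-1) x @ x # a)" by (simp add: inv)
    have e2: "replicate (k-1) x @ x # a = replicate k x @ a" using rep0 by (simp add: m)
    show ?thesis using e1 e2 by simp
  qed
  have "(invw k (x#a) @ x # a, invw k a @ a) \<in> wstep d k" unfolding eq by (rule A)
  then show ?case using Cons by (meson UnI1 converse_rtrancl_into_rtrancl words_Cons)
qed

lemma group_Gdk: assumes "k \<ge> 1" shows "group (Gdk d k)"
proof (rule groupI)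
  have car: "carrier (Gdk d k) = words d // weq d k" by (simp add: Gdk_def)
  have one: "\<one>\<^bsub>Gdk d k\<^esub> = weq d k `` {[]}" by (simp add: Gdk_def)
  show "\<one>\<^bsub>Gdk d k\<^esub> \<in> carrier (Gdk d k)" unfolding car one by (rule quotientI) simp
  fix x y z assume x: "x \<in> carrier (Gdk d k)"
  then obtain a where a: "a \<in> words d" "x = weq d k `` {a}" unfolding car by (auto elim: quotientE)
  show "\<one>\<^bsub>Gdk d k\<^esub> \<otimes>\<^bsub>Gdk d k\<^esub> x = x" unfolding one a(2) by (simp add: Gdk_mult a)
  show "\<exists>y\<in>carrier (Gdk d k). y \<otimes>\<^bsub>Gdk d k\<^esub> x = \<one>\<^bsub>Gdk d k\<^esub>"
  proof (intro bexI)
    show "weq d k `` {invw k a} \<in> carrier (Gdk d k)" unfolding car by (rule quotientI) (simp add: invw_words a)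
    have "(invw k a @ a, []) \<in> weq d k" unfolding weq_def using invw_cancel[OF assms a(1)] invw_words[OF a(1)] a by auto
    then show "weq d k `` {invw k a} \<otimes>\<^bsub>Gdk d k\<^esub> x = \<one>\<^bsub>Gdk d k\<^esub>"
      unfolding one a(2) by (simp add: Gdk_mult a invw_words equiv_class_eq[OF equiv_weq])
  qed
  assume y: "y \<in> carrier (Gdk d k)"
  then obtain b where b: "b \<in> words d" "y = weq d k `` {b}" unfolding car by (auto elim: quotientE)
  show "x \<otimes>\<^bsub>Gdk d k\<^esub> y \<in> carrier (Gdk d k)" unfolding a(2) b(2) car
    by (simp add: Gdk_mult a b quotientI)
  assume z: "z \<in> carrier (Gdk d k)"
  then obtain c where c: "c \<in> words d" "z = weq d k `` {c}" unfolding car by (auto elim: quotientE)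
  show "x \<otimes>\<^bsub>Gdk d k\<^esub> y \<otimes>\<^bsub>Gdk d k\<^esub> z = x \<otimes>\<^bsub>Gdk d k\<^esub> (y \<otimes>\<^bsub>Gdk d k\<^esub> z)"
    unfolding a(2) b(2) c(2) by (simp add: Gdk_mult a b c)
qed

lemma alpha_carrier: "i \<le> d \<Longrightarrow> alpha d k i \<in> carrier (Gdk d k)"
  unfolding alpha_def Gdk_def by (auto intro: quotientI)


locale Xc = fixes d k :: nat and H :: "nat list set set"
  assumes grp: "group (Gdk d k)" and sub: "subgroup H (Gdk d k)"
begin

sublocale G: group "Gdk d k" by (rule grp)

lemma K_sub: "subgroup (Kgen d k (hatJ d J)) (Gdk d k)"
  unfolding Kgen_def
proof (rule G.generate_is_subgroup, rule image_subsetI)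
  fix i assume "i \<in> hatJ d J"
  then have "i \<le> d" by (simp add: hatJ_def)
  then show "alpha d k i \<in> carrier (Gdk d k)" by (rule alpha_carrier)
qed

lemma H_car: "h \<in> H \<Longrightarrow> h \<in> carrier (Gdk d k)"
  by (rule subgroup.mem_carrier[OF sub])

lemma K_car: "x \<in> Kgen d k (hatJ d J) \<Longrightarrow> x \<in> carrier (Gdk d k)"
  by (rule subgroup.mem_carrier[OF K_sub])

lemma mcls_absorb: assumes "g \<in> carrier (Gdk d k)" "h \<in> H"
  shows "mcls d k H J (g \<otimes>\<^bsub>Gdk d k\<^esub> h) = mcls d k H J g"
  unfolding mcls_def
proof (intro equalityI subsetI)
  fix Y assume "Y \<in> (\<lambda>h1. r_coset (Gdk d k) (Kgen d k (hatJ d J)) (g \<otimes>\<^bsub>Gdk d k\<^esub> h \<otimes>\<^bsub>Gdk d k\<^esub> h1)) ` H"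
  then obtain h1 where h1: "h1 \<in> H" "Y = r_coset (Gdk d k) (Kgen d k (hatJ d J)) (g \<otimes>\<^bsub>Gdk d k\<^esub> h \<otimes>\<^bsub>Gdk d k\<^esub> h1)" by (rule imageE)
  have e: "g \<otimes>\<^bsub>Gdk d k\<^esub> h \<otimes>\<^bsub>Gdk d k\<^esub> h1 = g \<otimes>\<^bsub>Gdk d k\<^esub> (h \<otimes>\<^bsub>Gdk d k\<^esub> h1)"
    by (rule G.m_assoc[OF assms(1) H_car[OF assms(2)] H_car[OF h1(1)]])
  have "Y = r_coset (Gdk d k) (Kgen d k (hatJ d J)) (g \<otimes>\<^bsub>Gdk d k\<^esub> (h \<otimes>\<^bsub>Gdk d k\<^esub> h1))"
    using h1(2) unfolding e .
  moreover have "h \<otimes>\<^bsub>Gdk d k\<^esub> h1 \<in> H" by (rule subgroup.m_closed[OF sub assms(2) h1(1)])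
  ultimately show "Y \<in> (\<lambda>h1. r_coset (Gdk d k) (Kgen d k (hatJ d J)) (g \<otimes>\<^bsub>Gdk d k\<^esub> h1)) ` H" by (rule image_eqI)
next
  fix Y assume "Y \<in> (\<lambda>h1. r_coset (Gdk d k) (Kgen d k (hatJ d J)) (g \<otimes>\<^bsub>Gdk d k\<^esub> h1)) ` H"
  then obtain h1 where h1: "h1 \<in> H" "Y = r_coset (Gdk d k) (Kgen d k (hatJ d J)) (g \<otimes>\<^bsub>Gdk d k\<^esub> h1)" by (rule imageE)
  have ih: "inv\<^bsub>Gdk d k\<^esub> h \<in> H" by (rule subgroup.m_inv_closed[OF sub assms(2)])
  have hh: "inv\<^bsub>Gdk d k\<^esub> h \<otimes>\<^bsub>Gdk d k\<^esub> h1 \<in> H" by (rule subgroup.m_closed[OF sub ih h1(1)])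
  have hc: "h \<in> carrier (Gdk d k)" "h1 \<in> carrier (Gdk d k)" "inv\<^bsub>Gdk d k\<^esub> h \<in> carrier (Gdk d k)"
    using H_car h1(1) assms(2) ih by auto
  have "g \<otimes>\<^bsub>Gdk d k\<^esub> h \<otimes>\<^bsub>Gdk d k\<^esub> (inv\<^bsub>Gdk d k\<^esub> h \<otimes>\<^bsub>Gdk d k\<^esub> h1)
      = g \<otimes>\<^bsub>Gdk d k\<^esub> (h \<otimes>\<^bsub>Gdk d k\<^esub> (inv\<^bsub>Gdk d k\<^esub> h \<otimes>\<^bsub>Gdk d k\<^esub> h1))"
    using G.m_assoc assms(1) hc G.m_closed by metis
  also have "h \<otimes>\<^bsub>Gdk d k\<^esub> (inv\<^bsub>Gdk d k\<^esub> h \<otimes>\<^bsub>Gdk d k\<^esub> h1) = h1"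
    using hc by (metis G.inv_solve_left G.m_closed)
  finally have e: "g \<otimes>\<^bsub>Gdk d k\<^esub> h \<otimes>\<^bsub>Gdk d k\<^esub> (inv\<^bsub>Gdk d k\<^esub> h \<otimes>\<^bsub>Gdk d k\<^esub> h1) = g \<otimes>\<^bsub>Gdk d k\<^esub> h1" .
  have "Y = r_coset (Gdk d k) (Kgen d k (hatJ d J)) (g \<otimes>\<^bsub>Gdk d k\<^esub> h \<otimes>\<^bsub>Gdk d k\<^esub> (inv\<^bsub>Gdk d k\<^esub> h \<otimes>\<^bsub>Gdk d k\<^esub> h1))"
    unfolding e by (rule h1(2))
  then show "Y \<in> (\<lambda>h1. r_coset (Gdk d k) (Kgen d k (hatJ d J)) (g \<otimes>\<^bsub>Gdk d k\<^esub> h \<otimes>\<^bsub>Gdk d k\<^esub> h1)) ` H"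
    using hh by (rule image_eqI)
qed

lemma mcls_left: assumes "x \<in> Kgen d k (hatJ d J)" "g \<in> carrier (Gdk d k)"
  shows "mcls d k H J (x \<otimes>\<^bsub>Gdk d k\<^esub> g) = mcls d k H J g"
  unfolding mcls_def
proof (rule image_cong[OF refl])
  fix h assume h: "h \<in> H"
  have xc: "x \<in> carrier (Gdk d k)" by (rule K_car[OF assms(1)])
  have hc: "h \<in> carrier (Gdk d k)" by (rule H_car[OF h])
  have gh: "g \<otimes>\<^bsub>Gdk d k\<^esub> h \<in> carrier (Gdk d k)" by (rule G.m_closed[OF assms(2) hc])
  have e: "x \<otimes>\<^bsub>Gdk d k\<^esub> g \<otimes>\<^bsub>Gdk d k\<^esub> h = x \<otimes>\<^bsub>Gdk d k\<^esub> (g \<otimes>\<^bsub>Gdk d k\<^esub> h)"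
    by (rule G.m_assoc[OF xc assms(2) hc])
  have "r_coset (Gdk d k) (Kgen d k (hatJ d J)) (x \<otimes>\<^bsub>Gdk d k\<^esub> g \<otimes>\<^bsub>Gdk d k\<^esub> h)
      = r_coset (Gdk d k) (r_coset (Gdk d k) (Kgen d k (hatJ d J)) x) (g \<otimes>\<^bsub>Gdk d k\<^esub> h)"
    unfolding e by (rule G.coset_mult_assoc[symmetric, OF subgroup.subset[OF K_sub] xc gh])
  also have "r_coset (Gdk d k) (Kgen d k (hatJ d J)) x = Kgen d k (hatJ d J)"
    using G.coset_join2[OF xc K_sub assms(1)] .
  finally show "r_coset (Gdk d k) (Kgen d k (hatJ d J)) (x \<otimes>\<^bsub>Gdk d k\<^esub> g \<otimes>\<^bsub>Gdk d k\<^esub> h)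
      = r_coset (Gdk d k) (Kgen d k (hatJ d J)) (g \<otimes>\<^bsub>Gdk d k\<^esub> h)" .
qed

lemma mcls_decomp: assumes "mcls d k H J g0 = mcls d k H J g"
  "g0 \<in> carrier (Gdk d k)" "g \<in> carrier (Gdk d k)"
  shows "\<exists>x\<in>Kgen d k (hatJ d J). \<exists>h\<in>H. g0 = x \<otimes>\<^bsub>Gdk d k\<^esub> g \<otimes>\<^bsub>Gdk d k\<^esub> h"
proof -
  have one: "\<one>\<^bsub>Gdk d k\<^esub> \<in> H" by (rule subgroup.one_closed[OF sub])
  have "r_coset (Gdk d k) (Kgen d k (hatJ d J)) (g0 \<otimes>\<^bsub>Gdk d k\<^esub> \<one>\<^bsub>Gdk d k\<^esub>) \<in> mcls d k H J g0"
    unfolding mcls_def using one by (rule imageI)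
  moreover have "g0 \<otimes>\<^bsub>Gdk d k\<^esub> \<one>\<^bsub>Gdk d k\<^esub> = g0" by (rule G.r_one[OF assms(2)])
  ultimately have "r_coset (Gdk d k) (Kgen d k (hatJ d J)) g0 \<in> mcls d k H J g" using assms(1) by simp
  then obtain h where h: "h \<in> H" "r_coset (Gdk d k) (Kgen d k (hatJ d J)) g0 = r_coset (Gdk d k) (Kgen d k (hatJ d J)) (g \<otimes>\<^bsub>Gdk d k\<^esub> h)"
    unfolding mcls_def by (rule imageE)
  have hc: "h \<in> carrier (Gdk d k)" by (rule H_car[OF h(1)])
  have "g0 \<in> r_coset (Gdk d k) (Kgen d k (hatJ d J)) g0" by (rule G.rcos_self[OF assms(2) K_sub])
  then have "g0 \<in> r_coset (Gdk d k) (Kgen d k (hatJ d J)) (g \<otimes>\<^bsub>Gdk d k\<^esub> h)"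
    unfolding h(2) .
  then obtain x where x: "x \<in> Kgen d k (hatJ d J)" "g0 = x \<otimes>\<^bsub>Gdk d k\<^esub> (g \<otimes>\<^bsub>Gdk d k\<^esub> h)"
    unfolding r_coset_def by blast
  have "x \<otimes>\<^bsub>Gdk d k\<^esub> g \<otimes>\<^bsub>Gdk d k\<^esub> h = x \<otimes>\<^bsub>Gdk d k\<^esub> (g \<otimes>\<^bsub>Gdk d k\<^esub> h)"
    by (rule G.m_assoc[OF K_car[OF x(1)] assms(3) hc])
  then have "g0 = x \<otimes>\<^bsub>Gdk d k\<^esub> g \<otimes>\<^bsub>Gdk d k\<^esub> h" using x(2) by simp
  then show ?thesis using x(1) h(1) by blast
qed

end

context Xc begin

lemma main_link:
  assumes J: "J \<subseteq> {0..d}" "card J + 1 \<le> d" and g: "g \<in> carrier (Gdk d k)"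
  and a_def: "a = (J, mcls d k H J g)" and M_def: "M = multicells d k H"
  and V_def: "V = {b\<in>M. mdim b = mdim a + 1 \<and> mc_le d k H a b}"
  and E_def: "E = {c\<in>M. mdim c = mdim a + 2 \<and> mc_le d k H a c}"
  and adj_def: "adj = (\<lambda>u v. u \<in> V \<and> v \<in> V \<and> (\<exists>c\<in>E. mc_le d k H u c \<and> mc_le d k H v c))"
  shows "\<forall>u\<in>V. \<forall>v\<in>V. adj\<^sup>*\<^sup>* u v"
proof -
  define Kj where "Kj = Kgen d k (hatJ d J)"
  define vert where "vert = (\<lambda>i x. (insert i J, mcls d k H (insert i J) (x \<otimes>\<^bsub>Gdk d k\<^esub> g)))"
  have finJ: "finite J" using J(1) finite_subset by blast
  have hatc: "card (hatJ d J) \<ge> 2"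
  proof -
    have "card (hatJ d J) = card {0..d} - card J" unfolding hatJ_def
      using J(1) by (simp add: card_Diff_subset finJ)
    then show ?thesis using J(2) by simp
  qed
  have finhat: "finite (hatJ d J)" by (simp add: hatJ_def)
  have other: "\<exists>j\<in>hatJ d J. j \<noteq> l" for l
  proof -
    have "card (hatJ d J - {l}) \<ge> 1" using hatc card_Diff_singleton_if[of "hatJ d J" l] finhat by auto
    then have "hatJ d J - {l} \<noteq> {}" by (metis card.empty not_one_le_zero)
    then show ?thesis by auto
  qed
  have hatI: "i \<in> hatJ d J \<longleftrightarrow> i \<le> d \<and> i \<notin> J" for i by (auto simp: hatJ_def)
  have Kjc: "x \<in> Kj \<Longrightarrow> x \<in> carrier (Gdk d k)" for x unfolding Kj_def by (rule K_car)
  have Kjsub: "subgroup Kj (Gdk d k)" unfolding Kj_def by (rule K_sub)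
  have aeq: "a = (J, mcls d k H J (x \<otimes>\<^bsub>Gdk d k\<^esub> g))" if "x \<in> Kj" for x
    unfolding a_def using mcls_left[of x J g] that g Kj_def by simp
  have cardins: "card (insert i J) = card J + 1" if "i \<in> hatJ d J" for i
    using that finJ hatI by simp
  have inM: "(J', mcls d k H J' w) \<in> M" if "J' \<subseteq> {0..d}" "w \<in> carrier (Gdk d k)" for J' w
    unfolding M_def multicells_def using that by blast
  have vertV: "vert i x \<in> V" if i: "i \<in> hatJ d J" and x: "x \<in> Kj" for i x
  proof -
    have "vert i x \<in> M" unfolding vert_def using inM i x Kjc g J hatI by auto
    moreover have "mdim (vert i x) = mdim a + 1" unfolding vert_def a_def mdim_def
      using cardins[OF i] by simp
    moreover have "mc_le d k H a (vert i x)" unfolding mc_le_def vert_def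
      using aeq[OF x] i x Kjc g J hatI by (intro exI[of _ J] exI[of _ "insert i J"] exI[of _ "x \<otimes>\<^bsub>Gdk d k\<^esub> g"]) auto
    ultimately show ?thesis unfolding V_def by blast
  qed
  have edge: "adj (vert i x) (vert j x)" if i: "i \<in> hatJ d J" and j: "j \<in> hatJ d J" and ij: "i \<noteq> j"
    and x: "x \<in> Kj" for i j x
  proof -
    define c where "c = (insert i (insert j J), mcls d k H (insert i (insert j J)) (x \<otimes>\<^bsub>Gdk d k\<^esub> g))"
    have ij': "insert i (insert j J) \<subseteq> {0..d}" using i j J hatI by auto
    have "c \<in> M" unfolding c_def using inM ij' x Kjc g by auto
    moreover have "mdim c = mdim a + 2" unfolding c_def a_def mdim_def
      using i j ij finJ hatI by simp
    moreover have "mc_le d k H a c" unfolding mc_le_def c_def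
      using aeq[OF x] ij' x Kjc g J by (intro exI[of _ J] exI[of _ "insert i (insert j J)"] exI[of _ "x \<otimes>\<^bsub>Gdk d k\<^esub> g"]) auto
    ultimately have cE: "c \<in> E" unfolding E_def by blast
    have "mc_le d k H (vert i x) c" unfolding mc_le_def c_def vert_def
      using ij' x Kjc g by (intro exI[of _ "insert i J"] exI[of _ "insert i (insert j J)"] exI[of _ "x \<otimes>\<^bsub>Gdk d k\<^esub> g"]) auto
    moreover have "mc_le d k H (vert j x) c" unfolding mc_le_def c_def vert_def
      using ij' x Kjc g by (intro exI[of _ "insert j J"] exI[of _ "insert i (insert j J)"] exI[of _ "x \<otimes>\<^bsub>Gdk d k\<^esub> g"]) auto
    ultimately show ?thesis unfolding adj_def using cE vertV i j x by blast
  qed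
  have same: "adj\<^sup>*\<^sup>* (vert i x) (vert j x)" if "i \<in> hatJ d J" "j \<in> hatJ d J" "x \<in> Kj" for i j x
    using edge[OF that(1,2) _ that(3)] by (cases "i = j") auto
  have shift: "vert j (z \<otimes>\<^bsub>Gdk d k\<^esub> x) = vert j x"
    if "z \<in> Kgen d k (hatJ d (insert j J))" "x \<in> carrier (Gdk d k)" for j z x
  proof -
    have zc: "z \<in> carrier (Gdk d k)" using K_car that by blast
    have "mcls d k H (insert j J) (z \<otimes>\<^bsub>Gdk d k\<^esub> (x \<otimes>\<^bsub>Gdk d k\<^esub> g)) = mcls d k H (insert j J) (x \<otimes>\<^bsub>Gdk d k\<^esub> g)"
      using mcls_left[OF that(1)] that g by simp
    then show ?thesis unfolding vert_def using zc that g by (simp add: G.m_assoc)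
  qed
  have alK: "alpha d k l \<in> Kgen d k (hatJ d (insert j J))" "inv\<^bsub>Gdk d k\<^esub> (alpha d k l) \<in> Kgen d k (hatJ d (insert j J))"
    if "l \<in> hatJ d J" "l \<noteq> j" for l j
  proof -
    have "alpha d k l \<in> alpha d k ` hatJ d (insert j J)" using that by (auto simp: hatJ_def)
    then show "alpha d k l \<in> Kgen d k (hatJ d (insert j J))" "inv\<^bsub>Gdk d k\<^esub> (alpha d k l) \<in> Kgen d k (hatJ d (insert j J))"
      unfolding Kgen_def by (auto intro: generate.incl generate.inv)
  qed
  obtain i0 where i0: "i0 \<in> hatJ d J" using other by blast
  have oneK: "\<one>\<^bsub>Gdk d k\<^esub> \<in> Kj" by (rule subgroup.one_closed[OF Kjsub])
  define P where "P = (\<lambda>x. \<forall>i\<in>hatJ d J. adj\<^sup>*\<^sup>* (vert i x) (vert i0 \<one>\<^bsub>Gdk d k\<^esub>))"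
  have gen_step: "P (z \<otimes>\<^bsub>Gdk d k\<^esub> y)" if z: "z \<in> Kj" "\<And>j. j \<in> hatJ d J \<Longrightarrow> j \<noteq> l \<Longrightarrow> z \<in> Kgen d k (hatJ d (insert j J))"
    and y: "y \<in> Kj" "P y" for z y l
  proof -
    { fix i assume i: "i \<in> hatJ d J"
      obtain j where j: "j \<in> hatJ d J" "j \<noteq> l" using other by blast
      have zy: "z \<otimes>\<^bsub>Gdk d k\<^esub> y \<in> Kj" by (rule subgroup.m_closed[OF Kjsub z(1) y(1)])
      have "adj\<^sup>*\<^sup>* (vert i (z \<otimes>\<^bsub>Gdk d k\<^esub> y)) (vert j (z \<otimes>\<^bsub>Gdk d k\<^esub> y))" by (rule same[OF i j(1) zy])
      also have "vert j (z \<otimes>\<^bsub>Gdk d k\<^esub> y) = vert j y" using shift[OF z(2)[OF j] Kjc[OF y(1)]] .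
      also have "adj\<^sup>*\<^sup>* (vert j y) (vert i0 \<one>\<^bsub>Gdk d k\<^esub>)" using y(2) j unfolding P_def by blast
      finally have "adj\<^sup>*\<^sup>* (vert i (z \<otimes>\<^bsub>Gdk d k\<^esub> y)) (vert i0 \<one>\<^bsub>Gdk d k\<^esub>)" . }
    then show ?thesis unfolding P_def by blast
  qed
  have genP: "\<forall>y\<in>Kj. P y \<longrightarrow> P (x \<otimes>\<^bsub>Gdk d k\<^esub> y)" if "x \<in> Kj" for x
    using that[unfolded Kj_def Kgen_def]
  proof (induction rule: generate.induct)
    case one then show ?case using Kjc by simp
  next
    case (incl h)
    then obtain l where l: "l \<in> hatJ d J" "h = alpha d k l" by blast
    have "h \<in> Kj" unfolding Kj_def Kgen_def using incl by (blast intro: generate.incl)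
    moreover have "\<And>j. j \<in> hatJ d J \<Longrightarrow> j \<noteq> l \<Longrightarrow> h \<in> Kgen d k (hatJ d (insert j J))"
      using alK(1)[OF l(1)] l(2) by metis
    ultimately show ?case using gen_step[where z=h and l=l] by blast
  next
    case (inv h)
    then obtain l where l: "l \<in> hatJ d J" "h = alpha d k l" by blast
    have "inv\<^bsub>Gdk d k\<^esub> h \<in> Kj" unfolding Kj_def Kgen_def using inv by (blast intro: generate.inv)
    moreover have "\<And>j. j \<in> hatJ d J \<Longrightarrow> j \<noteq> l \<Longrightarrow> inv\<^bsub>Gdk d k\<^esub> h \<in> Kgen d k (hatJ d (insert j J))"
      using alK(2)[OF l(1)] l(2) by metis
    ultimately show ?case using gen_step[where z="inv\<^bsub>Gdk d k\<^esub> h" and l=l] by blast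
  next
    case (eng h1 h2)
    have h: "h1 \<in> Kj" "h2 \<in> Kj" using eng.hyps unfolding Kj_def Kgen_def by auto
    show ?case
    proof (intro ballI impI)
      fix y assume y: "y \<in> Kj" "P y"
      have "h2 \<otimes>\<^bsub>Gdk d k\<^esub> y \<in> Kj" by (rule subgroup.m_closed[OF Kjsub h(2) y(1)])
      then have "P (h1 \<otimes>\<^bsub>Gdk d k\<^esub> (h2 \<otimes>\<^bsub>Gdk d k\<^esub> y))" using eng.IH y by blast
      then show "P (h1 \<otimes>\<^bsub>Gdk d k\<^esub> h2 \<otimes>\<^bsub>Gdk d k\<^esub> y)" using h y Kjc by (simp add: G.m_assoc)
    qed
  qed
  have P1: "P \<one>\<^bsub>Gdk d k\<^esub>" unfolding P_def using same i0 oneK by blast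
  have allP: "P x" if "x \<in> Kj" for x
    using genP[OF that] P1 oneK Kjc[OF that] by force
  have Vdecomp: "\<exists>i\<in>hatJ d J. \<exists>x\<in>Kj. u = vert i x" if u: "u \<in> V" for u
  proof -
    from u have ule: "mc_le d k H a u" and ud: "mdim u = mdim a + 1" unfolding V_def by auto
    then obtain I J' g1 where h: "I \<subseteq> J'" "J' \<subseteq> {0..d}" "g1 \<in> carrier (Gdk d k)"
      "a = (I, mcls d k H I g1)" "u = (J', mcls d k H J' g1)" unfolding mc_le_def by blast
    have IJ: "I = J" "mcls d k H J g1 = mcls d k H J g" using h(4) unfolding a_def by auto
    have finJ': "finite J'" using h(2) finite_subset by blast
    have "card J' = card J + 1" using ud h(5) finJ' unfolding mdim_def a_def by simp
    then have "card (J' - J) = 1" using h(1) IJ finJ' by (simp add: card_Diff_subset finJ)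
    then obtain i where i: "J' - J = {i}" by (rule card_1_singletonE)
    have J'eq: "J' = insert i J" using i h(1) IJ by blast
    have ihat: "i \<in> hatJ d J" using i h(2) by (auto simp: hatJ_def)
    obtain x h0 where x: "x \<in> Kj" "h0 \<in> H" "g1 = x \<otimes>\<^bsub>Gdk d k\<^esub> g \<otimes>\<^bsub>Gdk d k\<^esub> h0"
      using mcls_decomp[OF IJ(2) h(3) g] unfolding Kj_def by blast
    have "mcls d k H J' g1 = mcls d k H J' (x \<otimes>\<^bsub>Gdk d k\<^esub> g)"
      using x mcls_absorb[of "x \<otimes>\<^bsub>Gdk d k\<^esub> g" h0 J'] Kjc g by simp
    have "u = vert i x" unfolding vert_def using h(5) J'eq
      \<open>mcls d k H J' g1 = mcls d k H J' (x \<otimes>\<^bsub>Gdk d k\<^esub> g)\<close> by simp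
    then show ?thesis using ihat x by blast
  qed
  have symadj: "adj u v \<Longrightarrow> adj v u" for u v unfolding adj_def by blast
  have conv: "adj\<^sup>*\<^sup>* u v \<Longrightarrow> adj\<^sup>*\<^sup>* v u" for u v
  proof -
    assume "adj\<^sup>*\<^sup>* u v"
    then have "(conversep adj)\<^sup>*\<^sup>* v u" by (rule rtranclp_converseI)
    moreover have "conversep adj = adj" using symadj by (auto intro!: ext)
    ultimately show ?thesis by simp
  qed
  show ?thesis
  proof (intro ballI)
    fix u v assume "u \<in> V" "v \<in> V"
    obtain i x where ix: "i \<in> hatJ d J" "x \<in> Kj" "u = vert i x" using Vdecomp[OF \<open>u \<in> V\<close>] by blast
    obtain j y where jy: "j \<in> hatJ d J" "y \<in> Kj" "v = vert j y" using Vdecomp[OF \<open>v \<in> V\<close>] by blast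
    from ix jy have "adj\<^sup>*\<^sup>* u (vert i0 \<one>\<^bsub>Gdk d k\<^esub>)" "adj\<^sup>*\<^sup>* v (vert i0 \<one>\<^bsub>Gdk d k\<^esub>)"
      using allP unfolding P_def by auto
    then show "adj\<^sup>*\<^sup>* u v" using conv by (meson rtranclp_trans)
  qed
qed

end



theorem proposition7:
  fixes d k :: nat and H :: "nat list set set"
  assumes "d \<ge> 1" and "k \<ge> 1"
    and "subgroup H (Gdk d k)"
  shows "Xtilde_link_connected d k H"
proof -
  interpret X: Xc d k H by (rule Xc.intro[OF group_Gdk[OF assms(2)] assms(3)])
  show ?thesis unfolding Xtilde_link_connected_def link_connected_def Let_def
    apply (rule ballI, rule impI)
    subgoal premises p for a
    proof -
      from p(1) obtain J g where J: "J \<subseteq> {0..d}" "g \<in> carrier (Gdk d k)" "a = (J, mcls d k H J g)"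
        unfolding multicells_def by blast
      have cJ: "card J + 1 \<le> d" using p(2) J(3) unfolding mdim_def by simp
      show ?thesis by (rule X.main_link[OF J(1) cJ J(2) J(3) refl refl refl refl])
    qed
    done
qed

end
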